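(* For any mm-space $X$, \[ \square(X,* )\ge 1-\sup_{x\in X}\mu_X(U_1(x)), \] where $U_1(x)=\{y\in X: d_X(x,y)<1\}$ and $*$ is the one-point mm-space.
   Context: An mm-space is a triple $(X,d_X,\mu_X)$ where $(X,d_X)$ is a complete separable metric space and $\mu_X$ is a Borel probability measure on $X$. A parameter of $X$ is a Borel map $\varphi\colon [0,1)\to X$ with $\varphi_*\mathcal{L}^1=\mu_X$. The box distance $\square(X,Y)$ is the infimum of $\varepsilon\ge 0$ such that there exist parameters $\varphi$ of $X$, $\psi$ of $Y$ and a Borel set $I_0\subset[0,1)$ with $\mathcal{L}^1(I_0)\ge 1-\varepsilon$ and $|d_X(\varphi(s),\varphi(t))-d_Y(\psi(s),\psi(t))|\le\varepsilon$ for all $s,t\in I_0$. The one-point mm-space $*$ has one point with the Dirac measure. *)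

theory Defs
  imports "HOL-Probability.Probability"
begin

text \<open>An mm-space is represented by a Polish metric type (complete, separable, metric
  given by dist) together with a Borel probability measure. For the generic box distance
  we take the metric as an explicit function argument.\<close>

definition mm_space :: "'a::polish_space measure \<Rightarrow> bool" where
  "mm_space \<mu> \<longleftrightarrow> sets \<mu> = sets borel \<and> prob_space \<mu>"

definition mm_parameter :: "'a measure \<Rightarrow> (real \<Rightarrow> 'a) \<Rightarrow> bool" where
  "mm_parameter \<mu> \<phi> \<longleftrightarrow>
     \<phi> \<in> measurable (restrict_space lborel {0..<1}) \<mu> \<and>
     distr (restrict_space lborel {0..<1}) \<mu> \<phi> = \<mu>"

definition box_dist ::
  "('a \<Rightarrow> 'a \<Rightarrow> real) \<Rightarrow> 'a measure \<Rightarrow> ('b \<Rightarrow> 'b \<Rightarrow> real) \<Rightarrow> 'b measure \<Rightarrow> real" where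
  "box_dist dX \<mu>X dY \<mu>Y = Inf {\<epsilon>. \<epsilon> \<ge> 0 \<and>
     (\<exists>\<phi> \<psi> I0. mm_parameter \<mu>X \<phi> \<and> mm_parameter \<mu>Y \<psi> \<and>
        I0 \<in> sets borel \<and> I0 \<subseteq> {0..<1} \<and> measure lborel I0 \<ge> 1 - \<epsilon> \<and>
        (\<forall>s\<in>I0. \<forall>t\<in>I0. \<bar>dX (\<phi> s) (\<phi> t) - dY (\<psi> s) (\<psi> t)\<bar> \<le> \<epsilon>))}"

definition one_point_dist :: "unit \<Rightarrow> unit \<Rightarrow> real" where
  "one_point_dist x y = 0"

definition one_point_measure :: "unit measure" where
  "one_point_measure = return (count_space UNIV) ()"

end

theory Submission
  imports Defs
begin


definition cf :: "(nat \<Rightarrow> bool) \<Rightarrow> nat \<Rightarrow> int" where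
  "cf b j = (if b j then 1 else 0)"

definition enc :: "(nat \<Rightarrow> bool) \<Rightarrow> real" where
  "enc b = (\<Sum>j. real_of_int (cf b j) / 4 ^ Suc j)"

fun Tpart :: "(nat \<Rightarrow> bool) \<Rightarrow> nat \<Rightarrow> int" where
  "Tpart b 0 = 0"
| "Tpart b (Suc m) = 4 * Tpart b m + cf b m"

lemma geo_third: "(\<lambda>n. (1/4::real) ^ Suc n) sums (1/3)"
proof -
  have "(\<lambda>n. (1/4::real) ^ n) sums (1 / (1 - 1/4))"
    by (rule geometric_sums) simp
  from sums_mult[OF this, of "1/4"] show ?thesis by simp
qed

lemma cf_bounds: "0 \<le> cf b j" "cf b j \<le> 1"
  by (auto simp: cf_def)

lemma enc_summable: "summable (\<lambda>j. real_of_int (cf b j) / 4 ^ Suc j)"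
proof (rule summable_comparison_test')
  show "summable (\<lambda>j. (1/4::real) ^ Suc j)"
    using geo_third by (rule sums_summable)
  show "norm (real_of_int (cf b j) / 4 ^ Suc j) \<le> (1/4) ^ Suc j" for j
    using cf_bounds[of b j] by (auto simp: power_one_over divide_right_mono)
qed

lemma Tpart_eq: "real_of_int (Tpart b m) = 4 ^ m * (\<Sum>i<m. real_of_int (cf b i) / 4 ^ Suc i)"
  by (induction m) (auto simp: algebra_simps)

lemma enc_digit: "floor (4 ^ Suc m * enc b) mod 4 = cf b m"
proof -
  let ?f = "\<lambda>j. real_of_int (cf b j) / 4 ^ Suc j"
  have s: "summable ?f" by (rule enc_summable)
  have split: "enc b = (\<Sum>n. ?f (n + Suc m)) + (\<Sum>i<Suc m. ?f i)"
    unfolding enc_def by (rule suminf_split_initial_segment[OF s])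
  have s2: "summable (\<lambda>n. ?f (n + Suc m))"
    using s by (rule summable_ignore_initial_segment)
  define tl where "tl = (\<Sum>n. real_of_int (cf b (n + Suc m)) / 4 ^ Suc n)"
  have tleq: "4 ^ Suc m * (\<Sum>n. ?f (n + Suc m)) = tl"
  proof -
    have "4 ^ Suc m * (\<Sum>n. ?f (n + Suc m)) = (\<Sum>n. 4 ^ Suc m * ?f (n + Suc m))"
      using suminf_mult[OF s2, of "4 ^ Suc m"] by simp
    also have "\<dots> = tl" unfolding tl_def
      by (rule suminf_cong) (simp add: power_add field_simps)
    finally show ?thesis .
  qed
  have st: "summable (\<lambda>n. real_of_int (cf b (n + Suc m)) / 4 ^ Suc n)"
  proof (rule summable_comparison_test')
    show "summable (\<lambda>j. (1/4::real) ^ Suc j)"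
      using geo_third by (rule sums_summable)
    show "norm (real_of_int (cf b (n + Suc m)) / 4 ^ Suc n) \<le> (1/4) ^ Suc n" for n
      using cf_bounds[of b "n + Suc m"] by (auto simp: power_one_over divide_right_mono)
  qed
  have tl0: "0 \<le> tl" unfolding tl_def
    by (rule suminf_nonneg[OF st]) (use cf_bounds in auto)
  have "tl \<le> (\<Sum>n. (1/4::real) ^ Suc n)" unfolding tl_def
    apply (rule suminf_le[OF _ st])
    using cf_bounds[of b] apply (auto simp: power_one_over divide_right_mono)[1]
    using geo_third by (rule sums_summable)
  also have "\<dots> = 1/3" using geo_third by (rule sums_unique[symmetric])
  finally have tl1: "tl < 1" by simp
  have "4 ^ Suc m * enc b = real_of_int (Tpart b (Suc m)) + tl"
    using split tleq Tpart_eq[of b "Suc m"] by (simp add: distrib_left)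
  moreover have "floor (real_of_int K + tl) = K" for K
    using tl0 tl1 by (simp add: floor_eq_iff)
  ultimately have "floor (4 ^ Suc m * enc b) = Tpart b (Suc m)"
    by metis
  then show ?thesis using cf_bounds[of b m] by simp
qed



definition bitx :: "(nat \<Rightarrow> 'a::metric_space) \<Rightarrow> 'a \<Rightarrow> nat \<Rightarrow> bool" where
  "bitx d x j = (dist x (d (snd (prod_decode j))) < (1/2) ^ (fst (prod_decode j)))"

definition code :: "(nat \<Rightarrow> 'a::metric_space) \<Rightarrow> 'a \<Rightarrow> real" where
  "code d x = enc (bitx d x)"

definition dig :: "nat \<Rightarrow> real \<Rightarrow> bool" where
  "dig j y = (floor (4 ^ Suc j * y) mod 4 = 1)"

definition Nk :: "nat \<Rightarrow> real \<Rightarrow> nat" where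
  "Nk k y = (LEAST n. dig (prod_encode (k, n)) y)"

definition sv :: "(nat \<Rightarrow> 'a::metric_space) \<Rightarrow> nat \<Rightarrow> real \<Rightarrow> 'a" where
  "sv d k y = d (Nk k y)"

definition Cs :: "(nat \<Rightarrow> 'a::metric_space) \<Rightarrow> real set" where
  "Cs d = {y. \<forall>k m. k \<le> m \<longrightarrow> dist (sv d k y) (sv d m y) \<le> 2 * (1/2) ^ k}"

definition fs :: "(nat \<Rightarrow> 'a::metric_space) \<Rightarrow> nat \<Rightarrow> real \<Rightarrow> 'a" where
  "fs d i y = (if y \<in> Cs d then sv d i y else d 0)"

definition dec :: "(nat \<Rightarrow> 'a::metric_space) \<Rightarrow> real \<Rightarrow> 'a" where
  "dec d y = lim (\<lambda>i. fs d i y)"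

lemma dig_code: "dig j (code d x) \<longleftrightarrow> bitx d x j"
  using enc_digit[of j "bitx d x"] unfolding dig_def code_def cf_def by auto

lemma Nk_code: "Nk k (code d x) = (LEAST n. dist x (d n) < (1/2) ^ k)"
  unfolding Nk_def dig_code bitx_def by simp

context
  fixes d :: "nat \<Rightarrow> 'a::metric_space"
  assumes dense: "\<And>x e. e > 0 \<Longrightarrow> \<exists>n. dist x (d n) < e"
begin

lemma sv_code: "dist x (sv d k (code d x)) < (1/2) ^ k"
proof -
  have "\<exists>n. dist x (d n) < (1/2) ^ k" by (rule dense) simp
  from LeastI_ex[OF this] show ?thesis unfolding sv_def Nk_code .
qed

lemma code_Cs: "code d x \<in> Cs d"
proof -
  have "dist (sv d k (code d x)) (sv d m (code d x)) \<le> 2 * (1/2) ^ k" if "k \<le> m" for k m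
  proof -
    have "(1/2::real) ^ m \<le> (1/2) ^ k" using that by (intro power_decreasing) auto
    moreover have "dist (sv d k (code d x)) (sv d m (code d x))
       \<le> dist x (sv d k (code d x)) + dist x (sv d m (code d x))"
      by (rule dist_triangle3)
    ultimately show ?thesis using sv_code[of x k] sv_code[of x m] by linarith
  qed
  then show ?thesis unfolding Cs_def by blast
qed

lemma fs_code_lim: "(\<lambda>i. fs d i (code d x)) \<longlonglongrightarrow> x"
proof -
  have "(\<lambda>i. dist (sv d i (code d x)) x) \<longlonglongrightarrow> 0"
  proof (rule real_tendsto_sandwich[of "\<lambda>i. 0" _ _ "\<lambda>i. (1/2) ^ i"])
    show "\<forall>\<^sub>F i in sequentially. 0 \<le> dist (sv d i (code d x)) x" by simp
    show "\<forall>\<^sub>F i in sequentially. dist (sv d i (code d x)) x \<le> (1/2) ^ i"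
      by (intro always_eventually allI) (metis sv_code dist_commute less_imp_le)
    show "(\<lambda>i. 0::real) \<longlonglongrightarrow> 0" by simp
    show "(\<lambda>i. (1/2::real) ^ i) \<longlonglongrightarrow> 0" by (rule LIMSEQ_power_zero) simp
  qed
  then have "(\<lambda>i. sv d i (code d x)) \<longlonglongrightarrow> x" by (rule iffD2[OF tendsto_dist_iff])
  then show ?thesis unfolding fs_def using code_Cs by simp
qed

lemma dec_code: "dec d (code d x) = x"
  unfolding dec_def using fs_code_lim by (rule limI)

end

lemma fs_Cauchy: "Cauchy (\<lambda>i. fs d i y)"
proof (cases "y \<in> Cs d")
  case True
  show ?thesis
  proof (rule metric_CauchyI)
    fix e :: real assume "e > 0"
    then obtain M where M: "(1/2::real) ^ M < e / 2"
      using real_arch_pow_inv[of "e/2" "1/2"] by auto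
    have "dist (fs d m y) (fs d n y) < e" if "M \<le> m" "M \<le> n" for m n
    proof -
      have A: "dist (fs d m y) (fs d n y) \<le> 2 * (1/2) ^ min m n"
      proof (cases "m \<le> n")
        case True then show ?thesis using \<open>y \<in> Cs d\<close> unfolding fs_def Cs_def by (simp add: min_def)
      next
        case False
        then have "dist (sv d n y) (sv d m y) \<le> 2 * (1/2) ^ n"
          using \<open>y \<in> Cs d\<close> unfolding Cs_def by simp
        then show ?thesis using False \<open>y \<in> Cs d\<close> unfolding fs_def
          by (simp add: min_def dist_commute)
      qed
      have "(1/2::real) ^ min m n \<le> (1/2) ^ M" using that by (simp add: power_decreasing)
      then show ?thesis using A M by linarith
    qed
    then show "\<exists>M. \<forall>m\<ge>M. \<forall>n\<ge>M. dist (fs d m y) (fs d n y) < e" by blast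
  qed
next
  case False
  then show ?thesis unfolding fs_def by (intro convergent_Cauchy) (simp add: convergent_const)
qed

lemma fs_lim: "(\<lambda>i. fs d i y) \<longlonglongrightarrow> dec (d :: nat \<Rightarrow> 'a::complete_space) y"
  unfolding dec_def using Cauchy_convergent[OF fs_Cauchy] by (simp add: convergent_LIMSEQ_iff)

lemma dig_meas[measurable]: "(\<lambda>y. dig j y) \<in> measurable borel (count_space UNIV)"
  unfolding dig_def by measurable

lemma Nk_meas[measurable]: "Nk k \<in> measurable borel (count_space UNIV)"
  unfolding Nk_def by measurable

lemma sv_meas[measurable]: "sv d k \<in> borel_measurable borel"
  unfolding sv_def
  by (rule measurable_compose[OF Nk_meas]) simp

lemma Cs_meas[measurable]: "Cs (d :: nat \<Rightarrow> 'a::{metric_space,second_countable_topology}) \<in> sets borel"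
  unfolding Cs_def by measurable

lemma fs_meas[measurable]: "fs (d :: nat \<Rightarrow> 'a::{metric_space,second_countable_topology}) i \<in> borel_measurable borel"
  unfolding fs_def by measurable

lemma dec_meas: "dec (d :: nat \<Rightarrow> 'a::polish_space) \<in> borel_measurable borel"
  by (rule borel_measurable_LIMSEQ_metric[OF fs_meas fs_lim])

lemma code_meas: "code (d :: nat \<Rightarrow> 'a::{metric_space,second_countable_topology}) \<in> borel_measurable borel"
proof (rule borel_measurable_LIMSEQ_metric)
  show "(\<lambda>i x. \<Sum>j<i. real_of_int (cf (bitx d x) j) / 4 ^ Suc j) i \<in> borel_measurable borel" for i
    unfolding cf_def bitx_def by measurable
  show "(\<lambda>i. (\<lambda>i x. \<Sum>j<i. real_of_int (cf (bitx d x) j) / 4 ^ Suc j) i x) \<longlonglongrightarrow> code d x" for x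
    unfolding code_def enc_def using enc_summable by (simp add: summable_LIMSEQ)
qed



lemma distr_Ico_Ioo:
  assumes f1: "f \<in> measurable (restrict_space lborel {0..<1::real}) N"
    and f2: "f \<in> measurable (restrict_space lborel {0<..<1::real}) N"
  shows "distr (restrict_space lborel {0..<1}) N f = distr (restrict_space lborel {0<..<1}) N f"
proof (rule measure_eqI)
  show "sets (distr (restrict_space lborel {0..<1}) N f) = sets (distr (restrict_space lborel {0<..<1}) N f)"
    by simp
  fix A assume "A \<in> sets (distr (restrict_space lborel {0..<1}) N f)"
  then have A: "A \<in> sets N" by simp
  have s1: "f -` A \<inter> {0..<1} \<in> sets lborel"
    using measurable_sets[OF f1 A] by (simp add: space_restrict_space sets_restrict_space_iff)
  have s2: "f -` A \<inter> {0<..<1} \<in> sets lborel"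
    using measurable_sets[OF f2 A] by (simp add: space_restrict_space sets_restrict_space_iff)
  have "emeasure (distr (restrict_space lborel {0..<1}) N f) A = emeasure lborel (f -` A \<inter> {0..<1})"
    using f1 A by (simp add: emeasure_distr space_restrict_space emeasure_restrict_space)
  also have "\<dots> = emeasure lborel (f -` A \<inter> {0<..<1})"
    by (rule emeasure_eq_AE[OF _ s1 s2]) (use AE_lborel_singleton[of "0::real"] in \<open>auto elim!: AE_mp\<close>)
  also have "\<dots> = emeasure (distr (restrict_space lborel {0<..<1}) N f) A"
    using f2 A by (simp add: emeasure_distr space_restrict_space emeasure_restrict_space)
  finally show "emeasure (distr (restrict_space lborel {0..<1}) N f) A =
     emeasure (distr (restrict_space lborel {0<..<1}) N f) A" .
qed

lemma param_exists:
  fixes \<mu> :: "'a::polish_space measure"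
  assumes "mm_space \<mu>"
  shows "\<exists>\<phi>. mm_parameter \<mu> \<phi>"
proof -
  have sets\<mu>: "sets \<mu> = sets borel" and P: "prob_space \<mu>"
    using assms unfolding mm_space_def by auto
  obtain D :: "'a set" where D: "countable D" "\<And>X. open X \<Longrightarrow> X \<noteq> {} \<Longrightarrow> \<exists>d\<in>D. d \<in> X"
    using countable_dense_exists by blast
  have Dne: "D \<noteq> {}" using D(2)[of UNIV] by auto
  define d where "d = from_nat_into D"
  have rd: "range d = D" unfolding d_def using Dne D(1) by simp
  have dense: "\<exists>n. dist x (d n) < e" if epos: "e > 0" for x e
  proof -
    obtain y where "y \<in> D" "y \<in> ball x e" using D(2)[of "ball x e"] epos by force
    then show ?thesis using rd by (auto simp: dist_commute)
  qed
  have code_m: "code d \<in> measurable \<mu> borel"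
    using code_meas[of d] by (simp add: measurable_cong_sets[OF sets\<mu> refl])
  have dec_m: "dec d \<in> measurable borel \<mu>"
    using dec_meas[of d] by (simp add: measurable_cong_sets[OF refl sets\<mu>])
  define \<nu> where "\<nu> = distr \<mu> borel (code d)"
  have "real_distribution \<nu>"
    unfolding real_distribution_def real_distribution_axioms_def \<nu>_def
    using prob_space.prob_space_distr[OF P code_m] by simp
  then interpret cdf_distribution \<nu> by (simp add: cdf_distribution_def)
  define h where "h t = (if t \<in> {0<..<1} then t else 1/2)" for t :: real
  define \<phi> where "\<phi> t = dec d (I (h t))" for t
  have hm: "h \<in> measurable borel (restrict_space borel {0<..<1})"
    by (rule measurable_restrict_space2) (auto simp: h_def[abs_def])
  have Im: "I \<in> measurable (restrict_space borel {0<..<1}) borel" by (rule measurable_CI)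
  have \<phi>m0: "\<phi> \<in> measurable borel \<mu>"
    unfolding \<phi>_def using measurable_comp[OF measurable_comp[OF hm Im] dec_m]
    by (simp add: comp_def)
  have \<phi>m: "\<phi> \<in> measurable (restrict_space lborel S) \<mu>" for S
    using measurable_restrict_space1[OF \<phi>m0]
    by (simp add: measurable_cong_sets[OF sets_restrict_space_cong[OF sets_lborel] refl])
  have Im': "I \<in> measurable (restrict_space lborel {0<..<1}) borel"
    using Im by (simp add: measurable_cong_sets[OF sets_restrict_space_cong[OF sets_lborel] refl])
  have "distr (restrict_space lborel {0..<1}) \<mu> \<phi> = distr (restrict_space lborel {0<..<1}) \<mu> \<phi>"
    by (rule distr_Ico_Ioo[OF \<phi>m \<phi>m])
  also have "\<dots> = distr (restrict_space lborel {0<..<1}) \<mu> (dec d \<circ> I)"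
    by (rule distr_cong) (auto simp: \<phi>_def h_def space_restrict_space)
  also have "\<dots> = distr (distr (restrict_space lborel {0<..<1}) borel I) \<mu> (dec d)"
    by (rule distr_distr[OF dec_m Im', symmetric])
  also have "\<dots> = distr \<nu> \<mu> (dec d)" by (simp add: distr_I_eq_M)
  also have "\<dots> = distr \<mu> \<mu> (dec d \<circ> code d)"
    unfolding \<nu>_def by (rule distr_distr[OF dec_m code_m])
  also have "\<dots> = distr \<mu> \<mu> (\<lambda>x. x)"
    by (rule distr_cong) (auto simp: dec_code[OF dense])
  also have "\<dots> = \<mu>" by simp
  finally show ?thesis unfolding mm_parameter_def using \<phi>m by blast
qed



lemma one_point_param: "mm_parameter one_point_measure (\<lambda>_. ())"
proof -
  have m: "(\<lambda>_. ()) \<in> measurable (restrict_space lborel {0..<1::real}) one_point_measure"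
    unfolding one_point_measure_def
    by (simp add: measurable_cong_sets[OF refl sets_return])
  have "distr (restrict_space lborel {0..<1::real}) one_point_measure (\<lambda>_. ()) = one_point_measure"
  proof (rule measure_eqI)
    fix A assume A: "A \<in> sets (distr (restrict_space lborel {0..<1::real}) one_point_measure (\<lambda>_. ()))"
    have "A = {} \<or> A = UNIV" by (cases "() \<in> A") auto
    then show "emeasure (distr (restrict_space lborel {0..<1::real}) one_point_measure (\<lambda>_. ())) A =
      emeasure one_point_measure A"
    proof
      assume "A = {}" then show ?thesis by simp
    next
      assume "A = UNIV"
      then show ?thesis using m
        by (simp add: emeasure_distr space_restrict_space emeasure_restrict_space one_point_measure_def)
    qed
  qed simp
  then show ?thesis unfolding mm_parameter_def using m by blast
qed

theorem proposition4p1: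
  fixes \<mu> :: "'a::polish_space measure"
  assumes "mm_space \<mu>"
  shows "box_dist dist \<mu> one_point_dist one_point_measure
           \<ge> 1 - (SUP x. measure \<mu> {y. dist x y < 1})"
proof -
  have sets\<mu>: "sets \<mu> = sets borel" and P: "prob_space \<mu>"
    using assms unfolding mm_space_def by auto
  define M0 where "M0 = (SUP x. measure \<mu> {y. dist x y < 1})"
  have bdd: "bdd_above (range (\<lambda>x. measure \<mu> {y. dist x y < 1}))"
    by (rule bdd_aboveI[of _ 1]) (use prob_space.prob_le_1[OF P] in auto)
  have le: "measure \<mu> {y. dist x y < 1} \<le> M0" for x
    unfolding M0_def by (rule cSUP_upper[OF _ bdd]) simp
  have M0nn: "0 \<le> M0" using le[of undefined] measure_nonneg[of \<mu>] by (meson order_trans)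
  obtain \<phi>0 where \<phi>0: "mm_parameter \<mu> \<phi>0" using param_exists[OF assms] by blast
  define S where "S = {\<epsilon>. \<epsilon> \<ge> 0 \<and>
     (\<exists>\<phi> \<psi> I0. mm_parameter \<mu> \<phi> \<and> mm_parameter one_point_measure \<psi> \<and>
        I0 \<in> sets borel \<and> I0 \<subseteq> {0..<1} \<and> measure lborel I0 \<ge> 1 - \<epsilon> \<and>
        (\<forall>s\<in>I0. \<forall>t\<in>I0. \<bar>dist (\<phi> s) (\<phi> t) - one_point_dist (\<psi> s) (\<psi> t)\<bar> \<le> \<epsilon>))}"
  have "1 \<in> S" unfolding S_def
    using \<phi>0 one_point_param by (intro CollectI conjI exI[of _ \<phi>0] exI[of _ "\<lambda>_. ()"] exI[of _ "{}"]) auto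
  then have Sne: "S \<noteq> {}" by blast
  have bound: "1 - M0 \<le> \<epsilon>" if "\<epsilon> \<in> S" for \<epsilon>
  proof (cases "\<epsilon> \<ge> 1")
    case True then show ?thesis using M0nn by linarith
  next
    case False
    from that obtain \<phi> \<psi> I0 where e0: "\<epsilon> \<ge> 0" and \<phi>: "mm_parameter \<mu> \<phi>"
      and I0: "I0 \<in> sets borel" "I0 \<subseteq> {0..<1}" "measure lborel I0 \<ge> 1 - \<epsilon>"
      and close: "\<forall>s\<in>I0. \<forall>t\<in>I0. \<bar>dist (\<phi> s) (\<phi> t) - one_point_dist (\<psi> s) (\<psi> t)\<bar> \<le> \<epsilon>"
      unfolding S_def by blast
    have "I0 \<noteq> {}" using I0(3) False by auto
    then obtain s0 where s0: "s0 \<in> I0" by blast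
    define U where "U = {y. dist (\<phi> s0) y < 1}"
    have U: "U \<in> sets \<mu>" unfolding sets\<mu> U_def
      by (metis borel_open mem_ball open_ball Collect_mem_eq[of "ball (\<phi> s0) 1"] ball_def)
    have \<phi>m: "\<phi> \<in> measurable (restrict_space lborel {0..<1}) \<mu>"
      and \<phi>d: "distr (restrict_space lborel {0..<1}) \<mu> \<phi> = \<mu>"
      using \<phi> unfolding mm_parameter_def by auto
    define B where "B = \<phi> -` U \<inter> {0..<1::real}"
    have Bs: "B \<in> sets lborel"
      using measurable_sets[OF \<phi>m U] unfolding B_def
      by (simp add: space_restrict_space sets_restrict_space_iff)
    have sub: "I0 \<subseteq> B"
    proof
      fix t assume t: "t \<in> I0"
      have "\<bar>dist (\<phi> s0) (\<phi> t) - one_point_dist (\<psi> s0) (\<psi> t)\<bar> \<le> \<epsilon>" using close s0 t by blast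
      then have "dist (\<phi> s0) (\<phi> t) < 1" using False by (simp add: one_point_dist_def)
      then show "t \<in> B" using t I0(2) unfolding B_def U_def by auto
    qed
    have "measure \<mu> U = measure (distr (restrict_space lborel {0..<1}) \<mu> \<phi>) U" using \<phi>d by simp
    also have "\<dots> = measure (restrict_space lborel {0..<1}) B"
      using \<phi>m U unfolding B_def by (simp add: measure_distr space_restrict_space)
    also have "\<dots> = measure lborel B"
      by (rule measure_restrict_space) (auto simp: B_def)
    finally have mU: "measure \<mu> U = measure lborel B" .
    have Bf: "B \<in> fmeasurable lborel"
    proof (rule fmeasurableI2)
      show "{0..<1::real} \<in> fmeasurable lborel" by (intro fmeasurableI) auto
      show "B \<subseteq> {0..<1}" unfolding B_def by auto
    qed (rule Bs)
    have "measure lborel I0 \<le> measure lborel B"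
      by (rule measure_mono_fmeasurable[OF sub _ Bf]) (use I0(1) in simp)
    then have "1 - \<epsilon> \<le> measure \<mu> U" using I0(3) mU by linarith
    moreover have "measure \<mu> U \<le> M0" using le unfolding U_def by blast
    ultimately show ?thesis by linarith
  qed
  have "1 - M0 \<le> Inf S" by (rule cInf_greatest[OF Sne bound])
  then show ?thesis unfolding box_dist_def M0_def S_def by simp
qed

end
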